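(* Let $X$ be a compact topological space equipped with a continuous action of a sofic monoid $M$, let $\Sigma=(D_i,\sigma_i)_{i\in I}$ be a sofic approximation of $M$ with $\lim_{i\in I}|D_i|=\infty$, and let $\rho$ be a continuous pseudometric on $X$. Then $$h_\Sigma(X,M,\rho)=\sup_{\varepsilon>0}\inf_F\inf_{\delta>0}\limsup_{i\in I}\frac{1}{|D_i|}\log N_\varepsilon(\operatorname{Map}(X,M,\rho,F,\delta,\sigma_i),\rho_2^{D_i}),$$ where $\inf_F$ is over all finite subsets $F\subset M$.
   Context: Hamming metric on $\operatorname{Map}(D)$ (maps $D\to D$, $D$ finite non-empty): $d_D^{\mathrm{Ham}}(f,g)=\frac{1}{|D|}|\{v:f(v)\ne g(v)\}|$. A sofic approximation of a monoid $M$ is a net $(D_i,\sigma_i)_{i\in I}$ over a directed set, $D_i$ non-empty finite, $\sigma_i\colon M\to\operatorname{Map}(D_i)$, with $\sigma_i(1_M)=\mathrm{Id}_{D_i}$, $\lim_i d^{\mathrm{Ham}}_{D_i}(\sigma_i(m_1m_2),\sigma_i(m_1)\sigma_i(m_2))=0$ for all $m_1,m_2$, and $\lim_i d^{\mathrm{Ham}}_{D_i}(\sigma_i(m_1),\sigma_i(m_2))=1$ for all distinct $m_1,m_2$; $M$ is sofic iff it admits one. For non-empty finite $D$, on $X^D$ set $\rho_2^D(\varphi,\psi)=(\frac{1}{|D|}\sum_{v\in D}\rho(\varphi(v),\psi(v))^2)^{1/2}$, $\rho_\infty^D(\varphi,\psi)=\max_{v}\rho(\varphi(v),\psi(v))$,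 and $(m\varphi)(v)=m\varphi(v)$. For finite $F\subset M$, $\delta>0$, $\sigma\colon M\to\operatorname{Map}(D)$: $\operatorname{Map}(X,M,\rho,F,\delta,\sigma)=\{\varphi\in X^D:\rho_2^D(\varphi\circ\sigma(m),m\varphi)\le\delta\ \forall m\in F\}$. $N_\varepsilon(Z,d)$ is the maximal cardinality of a subset of $Z$ with pairwise $d$-distances $\ge\varepsilon$. The sofic topological entropy is $h_\Sigma(X,M,\rho)=\sup_{\varepsilon>0}\inf_F\inf_{\delta>0}\limsup_i\frac{1}{|D_i|}\log N_\varepsilon(\operatorname{Map}(X,M,\rho,F,\delta,\sigma_i),\rho_\infty^{D_i})$ ($\log 0=-\infty$). *)

theory Defs
  imports "HOL-Analysis.Analysis" "HOL-Library.Extended_Real"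
begin

definition directed_set :: "'i set \<Rightarrow> ('i \<Rightarrow> 'i \<Rightarrow> bool) \<Rightarrow> bool" where
  "directed_set I le \<longleftrightarrow> I \<noteq> {}
     \<and> (\<forall>a\<in>I. le a a)
     \<and> (\<forall>a\<in>I. \<forall>b\<in>I. \<forall>c\<in>I. le a b \<longrightarrow> le b c \<longrightarrow> le a c)
     \<and> (\<forall>a\<in>I. \<forall>b\<in>I. \<exists>c\<in>I. le a c \<and> le b c)"

definition net_filter :: "'i set \<Rightarrow> ('i \<Rightarrow> 'i \<Rightarrow> bool) \<Rightarrow> 'i filter" where
  "net_filter I le = (INF i\<in>I. principal {j\<in>I. le i j})"

definition hamming :: "'d set \<Rightarrow> ('d \<Rightarrow> 'd) \<Rightarrow> ('d \<Rightarrow> 'd) \<Rightarrow> real" where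
  "hamming D f g = real (card {v\<in>D. f v \<noteq> g v}) / real (card D)"

definition sofic_approximation ::
  "'i set \<Rightarrow> ('i \<Rightarrow> 'i \<Rightarrow> bool) \<Rightarrow> ('i \<Rightarrow> 'd set) \<Rightarrow> ('i \<Rightarrow> 'm::monoid_mult \<Rightarrow> 'd \<Rightarrow> 'd) \<Rightarrow> bool" where
  "sofic_approximation I le D \<sigma> \<longleftrightarrow>
     directed_set I le
   \<and> (\<forall>i\<in>I. finite (D i) \<and> D i \<noteq> {})
   \<and> (\<forall>i\<in>I. \<forall>m. \<forall>v\<in>D i. \<sigma> i m v \<in> D i)
   \<and> (\<forall>i\<in>I. \<forall>v\<in>D i. \<sigma> i 1 v = v)
   \<and> (\<forall>m1 m2. ((\<lambda>i. hamming (D i) (\<sigma> i (m1 * m2)) (\<sigma> i m1 \<circ> \<sigma> i m2))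
                  \<longlongrightarrow> 0) (net_filter I le))
   \<and> (\<forall>m1 m2. m1 \<noteq> m2 \<longrightarrow> ((\<lambda>i. hamming (D i) (\<sigma> i m1) (\<sigma> i m2))
                  \<longlongrightarrow> 1) (net_filter I le))"

definition rho2 :: "'d set \<Rightarrow> ('x \<Rightarrow> 'x \<Rightarrow> real) \<Rightarrow> ('d \<Rightarrow> 'x) \<Rightarrow> ('d \<Rightarrow> 'x) \<Rightarrow> real" where
  "rho2 D \<rho> \<phi> \<psi> = sqrt ((\<Sum>v\<in>D. (\<rho> (\<phi> v) (\<psi> v))\<^sup>2) / real (card D))"

definition rhoinf :: "'d set \<Rightarrow> ('x \<Rightarrow> 'x \<Rightarrow> real) \<Rightarrow> ('d \<Rightarrow> 'x) \<Rightarrow> ('d \<Rightarrow> 'x) \<Rightarrow> real" where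
  "rhoinf D \<rho> \<phi> \<psi> = Max ((\<lambda>v. \<rho> (\<phi> v) (\<psi> v)) ` D)"

text \<open>Elements of X^D are represented as extensional functions D \<rightarrow> X.\<close>
definition MapSet ::
  "('m \<Rightarrow> 'x \<Rightarrow> 'x) \<Rightarrow> ('x \<Rightarrow> 'x \<Rightarrow> real) \<Rightarrow> 'm set \<Rightarrow> real \<Rightarrow> 'd set \<Rightarrow> ('m \<Rightarrow> 'd \<Rightarrow> 'd)
     \<Rightarrow> ('d \<Rightarrow> 'x) set" where
  "MapSet act \<rho> F \<delta> D \<sigma> =
     {\<phi>. \<phi> \<in> extensional D \<and> (\<forall>m\<in>F. rho2 D \<rho> (\<phi> \<circ> \<sigma> m) (act m \<circ> \<phi>) \<le> \<delta>)}"

definition sep_number :: "real \<Rightarrow> 'a set \<Rightarrow> ('a \<Rightarrow> 'a \<Rightarrow> real) \<Rightarrow> ereal" where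
  "sep_number \<epsilon> Z d = (SUP S\<in>{S. S \<subseteq> Z \<and> finite S \<and>
        (\<forall>a\<in>S. \<forall>b\<in>S. a \<noteq> b \<longrightarrow> d a b \<ge> \<epsilon>)}. ereal (real (card S)))"

definition elog :: "ereal \<Rightarrow> ereal" where
  "elog x = (if x \<le> 0 then -\<infinity> else if x = \<infinity> then \<infinity> else ereal (ln (real_of_ereal x)))"

definition continuous_pseudometric :: "('x::topological_space \<Rightarrow> 'x \<Rightarrow> real) \<Rightarrow> bool" where
  "continuous_pseudometric \<rho> \<longleftrightarrow>
     (\<forall>x. \<rho> x x = 0) \<and> (\<forall>x y. \<rho> x y = \<rho> y x) \<and>
     (\<forall>x y z. \<rho> x z \<le> \<rho> x y + \<rho> y z) \<and>
     continuous_on UNIV (\<lambda>p. \<rho> (fst p) (snd p))"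

definition continuous_action :: "('m::monoid_mult \<Rightarrow> 'x::topological_space \<Rightarrow> 'x) \<Rightarrow> bool" where
  "continuous_action act \<longleftrightarrow>
     (\<forall>x. act 1 x = x) \<and> (\<forall>m1 m2 x. act (m1 * m2) x = act m1 (act m2 x)) \<and>
     (\<forall>m. continuous_on UNIV (act m))"

definition sofic_entropy ::
  "'i set \<Rightarrow> ('i \<Rightarrow> 'i \<Rightarrow> bool) \<Rightarrow> ('i \<Rightarrow> 'd set) \<Rightarrow> ('i \<Rightarrow> 'm \<Rightarrow> 'd \<Rightarrow> 'd)
     \<Rightarrow> ('m \<Rightarrow> 'x \<Rightarrow> 'x) \<Rightarrow> ('x \<Rightarrow> 'x \<Rightarrow> real) \<Rightarrow> ereal" where
  "sofic_entropy I le D \<sigma> act \<rho> =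
    (SUP \<epsilon>\<in>{0<..}. INF F\<in>{F. finite F}. INF \<delta>\<in>{0<..}.
       Limsup (net_filter I le)
         (\<lambda>i. ereal (1 / real (card (D i))) *
              elog (sep_number \<epsilon> (MapSet act \<rho> F \<delta> (D i) (\<sigma> i)) (rhoinf (D i) \<rho>))))"

end

theory Submission
  imports Defs
begin

lemma binom_count:
  fixes D :: "'d set" and JJ :: "'d set set"
  assumes fin: "finite D" and p: "0 < p" "p < 1" and sub: "JJ \<subseteq> Pow D"
    and bnd: "\<And>J. J \<in> JJ \<Longrightarrow> real (card J) \<le> r"
  shows "real (card JJ) * (exp (r * ln p) * (1-p) ^ card D) \<le> 1"
proof -
  have one: "(\<Sum>J\<in>Pow D. p ^ card J * (1-p) ^ card (D - J)) = 1"
    using prod_add[OF fin, of "\<lambda>_. p" "\<lambda>_. 1 - p"] by simp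
  have finJ: "finite JJ" using sub fin by (meson finite_Pow_iff rev_finite_subset)
  have "real (card JJ) * (exp (r * ln p) * (1-p) ^ card D)
      = (\<Sum>J\<in>JJ. exp (r * ln p) * (1-p) ^ card D)" by simp
  also have "\<dots> \<le> (\<Sum>J\<in>JJ. p ^ card J * (1-p) ^ card (D - J))"
  proof (rule sum_mono)
    fix J assume J: "J \<in> JJ"
    have "J \<subseteq> D" using J sub by auto
    have a: "exp (r * ln p) \<le> p ^ card J"
    proof -
      have "ln p < 0" using p by simp
      hence "r * ln p \<le> real (card J) * ln p" using bnd[OF J] by (simp add: mult_right_mono_neg)
      hence "exp (r * ln p) \<le> exp (real (card J) * ln p)" by simp
      also have "\<dots> = p ^ card J" using p by (simp add: exp_of_nat_mult)
      finally show ?thesis .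
    qed
    have b: "(1-p) ^ card D \<le> (1-p) ^ card (D - J)"
      using p fin by (intro power_decreasing) (auto simp: card_mono)
    show "exp (r * ln p) * (1-p) ^ card D \<le> p ^ card J * (1-p) ^ card (D - J)"
      using a b p by (intro mult_mono) auto
  qed
  also have "\<dots> \<le> (\<Sum>J\<in>Pow D. p ^ card J * (1-p) ^ card (D - J))"
    using sub fin p by (intro sum_mono2) auto
  finally show ?thesis using one by simp
qed

lemma nbhd_count:
  fixes \<rho> :: "'x \<Rightarrow> 'x \<Rightarrow> real" and D :: "'d set" and S :: "('d \<Rightarrow> 'x) set"
  assumes sym: "\<And>x y. \<rho> x y = \<rho> y x" and tri: "\<And>x y z. \<rho> x z \<le> \<rho> x y + \<rho> y z"
    and refl: "\<And>x. \<rho> x x = 0"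
    and finD: "finite D" and neD: "D \<noteq> {}"
    and finC: "finite C" and cov: "\<And>y. \<exists>c\<in>C. \<rho> c y < \<epsilon>/3"
    and eps: "0 < \<epsilon>" and eps': "0 < \<epsilon>'"
    and sep: "\<And>a b. a \<in> S \<Longrightarrow> b \<in> S \<Longrightarrow> a \<noteq> b \<Longrightarrow> \<epsilon> \<le> rhoinf D \<rho> a b"
  defines "r \<equiv> 4 * \<epsilon>'^2 / \<epsilon>^2 * real (card D)"
  shows "real (card {s\<in>S. rho2 D \<rho> s t < \<epsilon>'}) \<le> real (card {J\<in>Pow D. real (card J) \<le> r}) * real (card C) ^ nat (floor r)"
proof -
  define N where "N = {s\<in>S. rho2 D \<rho> s t < \<epsilon>'}"
  define JJ where "JJ = {J\<in>Pow D. real (card J) \<le> r}"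
  define Jf where "Jf s = {v\<in>D. \<epsilon>/2 \<le> \<rho> (s v) (t v)}" for s :: "'d \<Rightarrow> 'x"
  define cf where "cf y = (SOME c. c\<in>C \<and> \<rho> c y < \<epsilon>/3)" for y
  have cf: "cf y \<in> C" "\<rho> (cf y) y < \<epsilon>/3" for y
    using someI_ex[OF cov[of y, unfolded Bex_def]] unfolding cf_def by auto
  define f where "f s = (Jf s, restrict (\<lambda>v. cf (s v)) (Jf s))" for s
  have nonneg: "0 \<le> \<rho> x y" for x y using tri[of x x y] sym[of y x] refl[of x] by linarith
  have n0: "0 < real (card D)" using finD neD by (simp add: card_gt_0_iff)
  have Jbound: "real (card (Jf s)) \<le> r" if s: "s \<in> N" for s
  proof -
    let ?q = "\<lambda>v. (\<rho> (s v) (t v))^2"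
    have sq: "(\<Sum>v\<in>D. ?q v) / real (card D) < \<epsilon>'^2"
    proof -
      have ge: "0 \<le> (\<Sum>v\<in>D. ?q v) / real (card D)" by (intro divide_nonneg_nonneg sum_nonneg) auto
      have "sqrt ((\<Sum>v\<in>D. ?q v) / real (card D)) < \<epsilon>'" using s unfolding N_def rho2_def by auto
      hence "(sqrt ((\<Sum>v\<in>D. ?q v) / real (card D)))^2 < \<epsilon>'^2"
        using ge by (intro power_strict_mono) auto
      thus ?thesis using ge by simp
    qed
    have "real (card (Jf s)) * (\<epsilon>/2)^2 = (\<Sum>v\<in>Jf s. (\<epsilon>/2)^2)" by simp
    also have "\<dots> \<le> (\<Sum>v\<in>Jf s. ?q v)"
      by (intro sum_mono power_mono) (auto simp: Jf_def eps less_imp_le)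
    also have "\<dots> \<le> (\<Sum>v\<in>D. ?q v)"
      using finD by (intro sum_mono2) (auto simp: Jf_def)
    also have "\<dots> < \<epsilon>'^2 * real (card D)" using sq n0 by (simp add: field_simps)
    finally have "real (card (Jf s)) * (\<epsilon>/2)^2 < \<epsilon>'^2 * real (card D)" .
    thus ?thesis unfolding r_def using eps by (simp add: field_simps power2_eq_square)
  qed
  have inj: "inj_on f N"
  proof
    fix a b assume a: "a \<in> N" and b: "b \<in> N" and fab: "f a = f b"
    have JJ: "Jf a = Jf b" and cc: "\<And>v. v \<in> Jf a \<Longrightarrow> cf (a v) = cf (b v)"
      using fab unfolding f_def by (auto simp: restrict_def fun_eq_iff split: if_splits)
    have close: "\<rho> (a v) (b v) < \<epsilon>" if v: "v \<in> D" for v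
    proof (cases "v \<in> Jf a")
      case True
      have "\<rho> (a v) (b v) \<le> \<rho> (a v) (cf (a v)) + \<rho> (cf (a v)) (b v)" by (rule tri)
      also have "\<dots> = \<rho> (cf (a v)) (a v) + \<rho> (cf (b v)) (b v)" using cc[OF True] sym by simp
      also have "\<dots> < \<epsilon>/3 + \<epsilon>/3" using cf by (intro add_strict_mono) auto
      finally show ?thesis using eps by simp
    next
      case False
      hence "v \<notin> Jf b" using JJ by simp
      hence "\<rho> (b v) (t v) < \<epsilon>/2" "\<rho> (a v) (t v) < \<epsilon>/2" using False v unfolding Jf_def by auto
      moreover have "\<rho> (a v) (b v) \<le> \<rho> (a v) (t v) + \<rho> (t v) (b v)" by (rule tri)
      ultimately show ?thesis using sym[of "t v" "b v"] by simp
    qed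
    show "a = b"
    proof (rule ccontr)
      assume "a \<noteq> b"
      hence "\<epsilon> \<le> rhoinf D \<rho> a b" using sep a b unfolding N_def by auto
      moreover have "rhoinf D \<rho> a b < \<epsilon>" unfolding rhoinf_def
        using finD neD close by (subst Max_less_iff) auto
      ultimately show False by simp
    qed
  qed
  have finJJ: "finite JJ" unfolding JJ_def using finD by simp
  have img: "f ` N \<subseteq> Sigma JJ (\<lambda>J. J \<rightarrow>\<^sub>E C)"
  proof
    fix x assume "x \<in> f ` N"
    then obtain s where s: "s \<in> N" "x = f s" by auto
    have "Jf s \<in> JJ" using Jbound[OF s(1)] unfolding JJ_def Jf_def by auto
    moreover have "restrict (\<lambda>v. cf (s v)) (Jf s) \<in> Jf s \<rightarrow>\<^sub>E C" using cf by auto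
    ultimately show "x \<in> Sigma JJ (\<lambda>J. J \<rightarrow>\<^sub>E C)" using s unfolding f_def by auto
  qed
  have finSig: "finite (Sigma JJ (\<lambda>J. J \<rightarrow>\<^sub>E C))"
    using finJJ finC unfolding JJ_def using finite_subset[OF _ finD] by (intro finite_SigmaI finite_PiE) auto
  have "card N \<le> card (Sigma JJ (\<lambda>J. J \<rightarrow>\<^sub>E C))"
    using card_inj_on_le[OF inj img finSig] .
  also have "\<dots> = (\<Sum>J\<in>JJ. card C ^ card J)"
    using finJJ finC unfolding JJ_def
    using finite_subset[OF _ finD] by (subst card_SigmaI) (auto intro!: sum.cong finite_PiE simp: card_PiE)
  finally have "real (card N) \<le> (\<Sum>J\<in>JJ. real (card C) ^ card J)"
    by (metis (mono_tags, lifting) of_nat_le_iff of_nat_power of_nat_sum sum.cong)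
  also have "\<dots> \<le> (\<Sum>J\<in>JJ. real (card C) ^ nat (floor r))"
  proof (rule sum_mono)
    fix J assume J: "J \<in> JJ"
    have "C \<noteq> {}" using cov by blast
    hence "1 \<le> real (card C)" using finC by (simp add: Suc_le_eq card_gt_0_iff)
    moreover have "card J \<le> nat (floor r)" using J unfolding JJ_def
      by (simp add: le_nat_floor)
    ultimately show "real (card C) ^ card J \<le> real (card C) ^ nat (floor r)"
      by (rule power_increasing[rotated])
  qed
  finally show ?thesis unfolding N_def JJ_def by simp
qed

lemma rho2_sym:
  assumes sym: "\<And>x y. \<rho> x y = \<rho> y x"
  shows "rho2 D \<rho> a b = rho2 D \<rho> b a"
  unfolding rho2_def using sym by metis

lemma count_bound:
  fixes \<rho> :: "'x \<Rightarrow> 'x \<Rightarrow> real" and D :: "'d set" and S :: "('d \<Rightarrow> 'x) set"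
  assumes sym: "\<And>x y. \<rho> x y = \<rho> y x" and tri: "\<And>x y z. \<rho> x z \<le> \<rho> x y + \<rho> y z"
    and refl: "\<And>x. \<rho> x x = 0"
    and finD: "finite D" and neD: "D \<noteq> {}"
    and finC: "finite C" and cov: "\<And>y. \<exists>c\<in>C. \<rho> c y < \<epsilon>/3"
    and eps: "0 < \<epsilon>" and kap: "0 < \<kappa>"
    and p: "p = 1 - exp (-\<kappa>/2)"
    and tau: "0 < \<tau>" "\<tau> * (ln (real (card C)) - ln p) \<le> \<kappa>/2"
    and eps': "\<epsilon>' = \<epsilon> * sqrt \<tau> / 2"
    and sep: "\<And>a b. a \<in> S \<Longrightarrow> b \<in> S \<Longrightarrow> a \<noteq> b \<Longrightarrow> \<epsilon> \<le> rhoinf D \<rho> a b"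
  shows "real (card {s\<in>S. rho2 D \<rho> s t < \<epsilon>'}) \<le> exp (\<kappa> * real (card D))"
proof -
  define n where "n = real (card D)"
  define r where "r = 4 * \<epsilon>'^2 / \<epsilon>^2 * real (card D)"
  define K where "K = real (card C)"
  have e'pos: "0 < \<epsilon>'" unfolding eps' using eps tau by simp
  have rr: "r = \<tau> * n" unfolding r_def n_def eps' using eps tau
    by (simp add: power_mult_distrib power_divide field_simps)
  have p01: "0 < p" "p < 1" using p kap by auto
  have K1: "1 \<le> K" using cov finC unfolding K_def
    by (metis card_0_eq empty_iff less_one linorder_not_le of_nat_1 of_nat_less_iff)
  have r0: "0 \<le> r" unfolding r_def by simp
  have c1: "real (card {s\<in>S. rho2 D \<rho> s t < \<epsilon>'}) \<le> real (card {J\<in>Pow D. real (card J) \<le> r}) * K ^ nat (floor r)"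
    unfolding r_def K_def
    by (rule nbhd_count[OF sym tri refl finD neD finC cov eps e'pos sep]) auto
  have c2: "real (card {J\<in>Pow D. real (card J) \<le> r}) * (exp (r * ln p) * (1-p) ^ card D) \<le> 1"
    by (rule binom_count[OF finD p01]) auto
  have pos: "0 < exp (r * ln p) * (1-p) ^ card D" using p01 by simp
  have c3: "real (card {J\<in>Pow D. real (card J) \<le> r}) \<le> 1 / (exp (r * ln p) * (1-p) ^ card D)"
    using c2 pos by (simp add: field_simps)
  have c4: "K ^ nat (floor r) \<le> exp (r * ln K)"
  proof -
    have "K ^ nat (floor r) = exp (real (nat (floor r)) * ln K)" using K1
      by (simp add: exp_of_nat_mult)
    also have "\<dots> \<le> exp (r * ln K)" using K1 r0
      by (intro exp_mono mult_right_mono) auto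
    finally show ?thesis .
  qed
  have pw: "(1-p) ^ card D = exp (- \<kappa> * n / 2)" unfolding p n_def
    by (simp add: exp_of_nat_mult[symmetric] exp_minus field_simps)
  have "real (card {s\<in>S. rho2 D \<rho> s t < \<epsilon>'}) \<le> 1 / (exp (r * ln p) * (1-p) ^ card D) * exp (r * ln K)"
    using c1 c3 c4 by (meson K1 dual_order.trans mult_mono zero_le_power order.trans zero_le_one zero_le_divide_1_iff pos less_imp_le of_nat_0_le_iff)
  also have "\<dots> = exp (r * (ln K - ln p) + \<kappa> * n / 2)"
  proof -
    have e: "exp (r * (ln K - ln p) + \<kappa> * n / 2) = exp (r * ln K) * exp (\<kappa> * n / 2) / exp (r * ln p)"
      by (simp add: exp_add exp_diff right_diff_distrib)
    show ?thesis unfolding pw e by (simp add: exp_minus field_simps)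
  qed
  also have "\<dots> \<le> exp (\<kappa> * n)"
  proof -
    have "r * (ln K - ln p) = n * (\<tau> * (ln K - ln p))" unfolding rr by simp
    also have "\<dots> \<le> n * (\<kappa>/2)" using tau unfolding K_def by (intro mult_left_mono) (auto simp: n_def)
    finally have "r * (ln K - ln p) \<le> n * (\<kappa>/2)" .
    hence "r * (ln K - ln p) + \<kappa> * n / 2 \<le> \<kappa> * n" by (simp add: algebra_simps)
    thus ?thesis by simp
  qed
  finally show ?thesis unfolding n_def .
qed

lemma sep_compare:
  fixes \<rho> :: "'x \<Rightarrow> 'x \<Rightarrow> real" and D :: "'d set" and Z :: "('d \<Rightarrow> 'x) set"
  assumes sym: "\<And>x y. \<rho> x y = \<rho> y x" and tri: "\<And>x y z. \<rho> x z \<le> \<rho> x y + \<rho> y z"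
    and refl: "\<And>x. \<rho> x x = 0"
    and finD: "finite D" and neD: "D \<noteq> {}"
    and finC: "finite C" and cov: "\<And>y. \<exists>c\<in>C. \<rho> c y < \<epsilon>/3"
    and eps: "0 < \<epsilon>" and kap: "0 < \<kappa>"
    and p: "p = 1 - exp (-\<kappa>/2)"
    and tau: "0 < \<tau>" "\<tau> * (ln (real (card C)) - ln p) \<le> \<kappa>/2"
    and eps': "\<epsilon>' = \<epsilon> * sqrt \<tau> / 2"
  shows "sep_number \<epsilon> Z (rhoinf D \<rho>) \<le> sep_number \<epsilon>' Z (rho2 D \<rho>) * ereal (exp (\<kappa> * real (card D)))"
  unfolding sep_number_def[of \<epsilon>]
proof (rule SUP_least)
  fix S assume "S \<in> {S. S \<subseteq> Z \<and> finite S \<and> (\<forall>a\<in>S. \<forall>b\<in>S. a \<noteq> b \<longrightarrow> \<epsilon> \<le> rhoinf D \<rho> a b)}"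
  hence SZ: "S \<subseteq> Z" and finS: "finite S" and sep: "\<And>a b. a \<in> S \<Longrightarrow> b \<in> S \<Longrightarrow> a \<noteq> b \<Longrightarrow> \<epsilon> \<le> rhoinf D \<rho> a b"
    by auto
  define Sep where "Sep = {T. T \<subseteq> S \<and> (\<forall>a\<in>T. \<forall>b\<in>T. a \<noteq> b \<longrightarrow> \<epsilon>' \<le> rho2 D \<rho> a b)}"
  have finSep: "finite Sep" unfolding Sep_def using finS by simp
  have "{} \<in> Sep" unfolding Sep_def by simp
  hence neSep: "card ` Sep \<noteq> {}" by auto
  define m where "m = Max (card ` Sep)"
  obtain T where T: "T \<in> Sep" "card T = m" using Max_in[OF _ neSep] finSep unfolding m_def by auto
  have maxT: "card T' \<le> card T" if "T' \<in> Sep" for T'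
    using Max_ge[of "card ` Sep" "card T'"] finSep that T(2) unfolding m_def by auto
  have TS: "T \<subseteq> S" and Tsep: "\<And>a b. a \<in> T \<Longrightarrow> b \<in> T \<Longrightarrow> a \<noteq> b \<Longrightarrow> \<epsilon>' \<le> rho2 D \<rho> a b"
    using T(1) unfolding Sep_def by auto
  have finT: "finite T" using TS finS by (rule finite_subset)
  have e'pos: "0 < \<epsilon>'" unfolding eps' using eps tau by simp
  define N where "N t = {s\<in>S. rho2 D \<rho> s t < \<epsilon>'}" for t
  have cover: "S \<subseteq> (\<Union>t\<in>T. N t)"
  proof
    fix s assume s: "s \<in> S"
    show "s \<in> (\<Union>t\<in>T. N t)"
    proof (cases "s \<in> T")
      case True
      have "rho2 D \<rho> s s = 0" unfolding rho2_def using refl by simp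
      hence "s \<in> N s" unfolding N_def using s e'pos by simp
      thus ?thesis using True by (rule UN_I[rotated])
    next
      case False
      have "insert s T \<notin> Sep"
      proof
        assume "insert s T \<in> Sep"
        hence "card (insert s T) \<le> card T" by (rule maxT)
        thus False using False finT by simp
      qed
      hence nn: "\<not> (insert s T \<subseteq> S \<and> (\<forall>a\<in>insert s T. \<forall>b\<in>insert s T. a \<noteq> b \<longrightarrow> \<epsilon>' \<le> rho2 D \<rho> a b))"
        unfolding Sep_def mem_Collect_eq .
      have "insert s T \<subseteq> S" using s TS by (rule insert_subsetI)
      hence "\<not> (\<forall>a\<in>insert s T. \<forall>b\<in>insert s T. a \<noteq> b \<longrightarrow> \<epsilon>' \<le> rho2 D \<rho> a b)"
        using nn by blast
      then obtain a b where ab: "a \<in> insert s T" "b \<in> insert s T" "a \<noteq> b" "rho2 D \<rho> a b < \<epsilon>'"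
        by (meson not_le)
      have "\<exists>t\<in>T. rho2 D \<rho> s t < \<epsilon>'"
      proof (cases "a = s")
        case True
        thus ?thesis using ab by auto
      next
        case a: False
        hence "a \<in> T" using ab by auto
        show ?thesis
        proof (cases "b = s")
          case True
          thus ?thesis using ab \<open>a \<in> T\<close> rho2_sym[OF sym, where D=D and a=a and b=b] by auto
        next
          case False
          hence "b \<in> T" using ab by auto
          thus ?thesis using Tsep[of a b] ab \<open>a \<in> T\<close> by auto
        qed
      qed
      thus ?thesis using s unfolding N_def by auto
    qed
  qed
  have "card S \<le> card (\<Union>t\<in>T. N t)"
    using cover finT finS unfolding N_def by (intro card_mono) auto
  also have "\<dots> \<le> (\<Sum>t\<in>T. card (N t))" by (rule card_UN_le[OF finT])
  finally have "real (card S) \<le> (\<Sum>t\<in>T. real (card (N t)))"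
    by (metis of_nat_le_iff of_nat_sum)
  also have "\<dots> \<le> (\<Sum>t\<in>T. exp (\<kappa> * real (card D)))"
    unfolding N_def
    by (intro sum_mono count_bound[OF sym tri refl finD neD finC cov eps kap p tau eps']) (use sep in auto)
  also have "\<dots> = real (card T) * exp (\<kappa> * real (card D))" by simp
  finally have le: "ereal (real (card S)) \<le> ereal (real (card T)) * ereal (exp (\<kappa> * real (card D)))"
    by simp
  have "ereal (real (card T)) \<le> sep_number \<epsilon>' Z (rho2 D \<rho>)"
    unfolding sep_number_def using TS SZ finT Tsep by (intro SUP_upper) auto
  hence "ereal (real (card T)) * ereal (exp (\<kappa> * real (card D))) \<le> sep_number \<epsilon>' Z (rho2 D \<rho>) * ereal (exp (\<kappa> * real (card D)))"
    by (intro ereal_mult_right_mono) auto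
  with le show "ereal (real (card S)) \<le> sep_number \<epsilon>' Z (rho2 D \<rho>) * ereal (exp (\<kappa> * real (card D)))"
    by (rule order.trans)
qed

lemma rho2_le_rhoinf:
  assumes finD: "finite D" and neD: "D \<noteq> {}" and nonneg: "\<And>x y. 0 \<le> \<rho> x y"
  shows "rho2 D \<rho> a b \<le> rhoinf D \<rho> a b"
proof -
  define M where "M = rhoinf D \<rho> a b"
  have le: "\<rho> (a v) (b v) \<le> M" if "v \<in> D" for v
    unfolding M_def rhoinf_def using finD that by (intro Max_ge) auto
  have M0: "0 \<le> M" using le neD nonneg by (meson all_not_in_conv order.trans)
  have n0: "0 < real (card D)" using finD neD by (simp add: card_gt_0_iff)
  have "(\<Sum>v\<in>D. (\<rho> (a v) (b v))^2) \<le> (\<Sum>v\<in>D. M^2)"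
    using le nonneg by (intro sum_mono power_mono) auto
  hence "(\<Sum>v\<in>D. (\<rho> (a v) (b v))^2) / real (card D) \<le> M^2" using n0 by (simp add: field_simps)
  hence "rho2 D \<rho> a b \<le> sqrt (M^2)" unfolding rho2_def by (rule real_sqrt_le_mono)
  thus ?thesis using M0 unfolding M_def by simp
qed

lemma sep_mono:
  assumes finD: "finite D" and neD: "D \<noteq> {}" and nonneg: "\<And>x y. 0 \<le> \<rho> x y"
  shows "sep_number \<epsilon> Z (rho2 D \<rho>) \<le> sep_number \<epsilon> Z (rhoinf D \<rho>)"
  unfolding sep_number_def
proof (rule SUP_subset_mono)
  show "{S. S \<subseteq> Z \<and> finite S \<and> (\<forall>a\<in>S. \<forall>b\<in>S. a \<noteq> b \<longrightarrow> \<epsilon> \<le> rho2 D \<rho> a b)}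
    \<subseteq> {S. S \<subseteq> Z \<and> finite S \<and> (\<forall>a\<in>S. \<forall>b\<in>S. a \<noteq> b \<longrightarrow> \<epsilon> \<le> rhoinf D \<rho> a b)}"
  proof (rule subsetI, unfold mem_Collect_eq, elim conjE, intro conjI ballI impI)
    have h: "\<And>a b. rho2 D \<rho> a b \<le> rhoinf D \<rho> a b"
      by (rule rho2_le_rhoinf[OF finD neD]) (rule nonneg)
    fix S assume "S \<subseteq> Z" "finite S" and H: "\<forall>a\<in>S. \<forall>b\<in>S. a \<noteq> b \<longrightarrow> \<epsilon> \<le> rho2 D \<rho> a b"
    show "S \<subseteq> Z" "finite S" by fact+
    fix a b assume ab: "a \<in> S" "b \<in> S" "a \<noteq> b"
    have "\<epsilon> \<le> rho2 D \<rho> a b" using H ab by blast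
    thus "\<epsilon> \<le> rhoinf D \<rho> a b" using h[of a b] by linarith
  qed
qed simp

lemma elog_bound:
  assumes "A \<le> B * ereal c" and "0 < c"
  shows "elog A \<le> elog B + ereal (ln c)"
proof (cases "A \<le> 0")
  case True thus ?thesis by (simp add: elog_def)
next
  case A0: False
  hence Bc: "0 < B * ereal c" using assms(1) by (meson less_le_trans not_le)
  have B0: "0 < B"
  proof (rule ccontr)
    assume "\<not> 0 < B"
    hence "B \<le> 0" by simp
    hence "B * ereal c \<le> 0 * ereal c" using assms(2) by (intro ereal_mult_right_mono) auto
    thus False using Bc by simp
  qed
  show ?thesis
  proof (cases "B = \<infinity>")
    case True thus ?thesis using B0 by (simp add: elog_def)
  next
    case False
    then obtain b where b: "B = ereal b" "0 < b" using B0 by (cases B) auto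
    have "A \<le> ereal (b * c)" using assms(1) b by simp
    moreover have "0 < A" using A0 by simp
    ultimately obtain a where a: "A = ereal a" "0 < a" "a \<le> b * c" by (cases A) auto
    have "ln a \<le> ln (b * c)" using a b assms(2) by simp
    also have "\<dots> = ln b + ln c" using b assms(2) by (simp add: ln_mult)
    finally show ?thesis using a b by (simp add: elog_def)
  qed
qed

lemma elog_mono: "A \<le> B \<Longrightarrow> elog A \<le> elog B"
  unfolding elog_def
  by (cases A; cases B) (auto simp del: ln_le_cancel_iff intro: ln_le_cancel_iff[THEN iffD2])

lemma net_filter_eventually:
  assumes dir: "directed_set I le"
  shows "eventually P (net_filter I le) \<longleftrightarrow> (\<exists>b\<in>I. \<forall>j\<in>I. le b j \<longrightarrow> P j)"
proof -
  have ne: "I \<noteq> {}" and tr: "\<And>a b c. a \<in> I \<Longrightarrow> b \<in> I \<Longrightarrow> c \<in> I \<Longrightarrow> le a b \<Longrightarrow> le b c \<Longrightarrow> le a c"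
    and dr: "\<And>a b. a \<in> I \<Longrightarrow> b \<in> I \<Longrightarrow> \<exists>c\<in>I. le a c \<and> le b c"
    using dir unfolding directed_set_def by blast+
  have "eventually P (INF i\<in>I. principal {j\<in>I. le i j}) \<longleftrightarrow> (\<exists>b\<in>I. eventually P (principal {j\<in>I. le b j}))"
  proof (rule eventually_INF_base[OF ne])
    fix a b assume a: "a \<in> I" and b: "b \<in> I"
    obtain c where c: "c \<in> I" "le a c" "le b c" using dr[OF a b] by blast
    have "{j\<in>I. le c j} \<subseteq> {j\<in>I. le a j} \<inter> {j\<in>I. le b j}"
      using tr a b c by blast
    thus "\<exists>x\<in>I. principal {j\<in>I. le x j} \<le> inf (principal {j\<in>I. le a j}) (principal {j\<in>I. le b j})"
      using c by (intro bexI[of _ c]) (auto simp: inf_principal)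
  qed
  thus ?thesis unfolding net_filter_def eventually_principal by auto
qed

lemma net_filter_props:
  assumes dir: "directed_set I le"
  shows "eventually (\<lambda>i. i \<in> I) (net_filter I le)" "net_filter I le \<noteq> bot"
proof -
  have ne: "I \<noteq> {}" and rf: "\<And>a. a \<in> I \<Longrightarrow> le a a" using dir unfolding directed_set_def by blast+
  show "eventually (\<lambda>i. i \<in> I) (net_filter I le)"
    using ne by (auto simp: net_filter_eventually[OF dir])
  show "net_filter I le \<noteq> bot"
  proof
    assume "net_filter I le = bot"
    hence "eventually (\<lambda>_. False) (net_filter I le)" by simp
    thus False using rf by (auto simp: net_filter_eventually[OF dir])
  qed
qed

lemma finite_cover:
  fixes \<rho> :: "'x::topological_space \<Rightarrow> 'x \<Rightarrow> real"
  assumes cpt: "compact (UNIV :: 'x set)" and cont: "continuous_on UNIV (\<lambda>p. \<rho> (fst p) (snd p))"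
    and refl: "\<And>x. \<rho> x x = 0" and e: "0 < e"
  obtains C where "finite C" "\<And>y. \<exists>c\<in>C. \<rho> c y < e"
proof -
  have op: "open {y. \<rho> c y < e}" for c
  proof -
    have c1: "continuous_on UNIV (\<lambda>y::'x. (c, y))" by (rule continuous_on_Pair[OF continuous_on_const continuous_on_id])
    have "continuous_on UNIV ((\<lambda>p. \<rho> (fst p) (snd p)) \<circ> (\<lambda>y. (c, y)))"
      by (rule continuous_on_compose[OF c1 continuous_on_subset[OF cont subset_UNIV]])
    hence "continuous_on UNIV (\<lambda>y. \<rho> c y)" by (simp add: o_def)
    from open_Collect_less[OF this continuous_on_const] show ?thesis .
  qed
  have "UNIV \<subseteq> (\<Union>c\<in>UNIV. {y. \<rho> c y < e})"
  proof
    fix y :: 'x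
    have "y \<in> {y'. \<rho> y y' < e}" using refl[of y] e by simp
    thus "y \<in> (\<Union>c\<in>UNIV. {y. \<rho> c y < e})" by (rule UN_I[OF UNIV_I])
  qed
  from compactE_image[OF cpt op this] obtain C where C: "finite C" "UNIV \<subseteq> (\<Union>c\<in>C. {y. \<rho> c y < e})"
    by metis
  show ?thesis
  proof (rule that[OF C(1)])
    fix y :: 'x
    have "y \<in> (\<Union>c\<in>C. {y. \<rho> c y < e})" using C(2) by (rule subsetD) simp
    thus "\<exists>c\<in>C. \<rho> c y < e" by simp
  qed
qed

theorem proposition4p3:
  fixes act :: "'m::monoid_mult \<Rightarrow> 'x::topological_space \<Rightarrow> 'x"
    and \<rho> :: "'x \<Rightarrow> 'x \<Rightarrow> real"
    and I :: "'i set" and le :: "'i \<Rightarrow> 'i \<Rightarrow> bool"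
    and D :: "'i \<Rightarrow> 'd set" and \<sigma> :: "'i \<Rightarrow> 'm \<Rightarrow> 'd \<Rightarrow> 'd"
  assumes "compact (UNIV :: 'x set)"
    and "continuous_action act"
    and "sofic_approximation I le D \<sigma>"
    and "filterlim (\<lambda>i. real (card (D i))) at_top (net_filter I le)"
    and "continuous_pseudometric \<rho>"
  shows "sofic_entropy I le D \<sigma> act \<rho> =
    (SUP \<epsilon>\<in>{0<..}. INF F\<in>{F. finite F}. INF \<delta>\<in>{0<..}.
       Limsup (net_filter I le)
         (\<lambda>i. ereal (1 / real (card (D i))) *
              elog (sep_number \<epsilon> (MapSet act \<rho> F \<delta> (D i) (\<sigma> i)) (rho2 (D i) \<rho>))))"
proof -
  have refl: "\<And>x. \<rho> x x = 0" and sym: "\<And>x y. \<rho> x y = \<rho> y x"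
    and tri: "\<And>x y z. \<rho> x z \<le> \<rho> x y + \<rho> y z"
    and cont: "continuous_on UNIV (\<lambda>p. \<rho> (fst p) (snd p))"
    using assms(5) unfolding continuous_pseudometric_def by (blast, blast, blast, blast)
  have nonneg: "0 \<le> \<rho> x y" for x y using tri[of x x y] sym[of y x] refl[of x] by linarith
  have dir: "directed_set I le"
    using assms(3) unfolding sofic_approximation_def by (rule conjunct1)
  have DI0: "\<forall>i\<in>I. finite (D i) \<and> D i \<noteq> {}"
    using assms(3) unfolding sofic_approximation_def by (rule conjunct1[OF conjunct2])
  have DI: "\<And>i. i \<in> I \<Longrightarrow> finite (D i) \<and> D i \<noteq> {}" using DI0 by (rule bspec)
  define NF where "NF = net_filter I le"
  have evI: "eventually (\<lambda>i. i \<in> I) NF" and nb: "NF \<noteq> bot"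
    using net_filter_props[OF dir] unfolding NF_def by (blast, blast)
  define LA where "LA \<epsilon> F \<delta> = Limsup NF (\<lambda>i. ereal (1 / real (card (D i))) *
              elog (sep_number \<epsilon> (MapSet act \<rho> F \<delta> (D i) (\<sigma> i)) (rhoinf (D i) \<rho>)))" for \<epsilon> F \<delta>
  define LB where "LB \<epsilon> F \<delta> = Limsup NF (\<lambda>i. ereal (1 / real (card (D i))) *
              elog (sep_number \<epsilon> (MapSet act \<rho> F \<delta> (D i) (\<sigma> i)) (rho2 (D i) \<rho>)))" for \<epsilon> F \<delta>
  have AB: "LB \<epsilon> F \<delta> \<le> LA \<epsilon> F \<delta>" for \<epsilon> F \<delta>
    unfolding LA_def LB_def
  proof (rule Limsup_mono)
    show "eventually (\<lambda>i. ereal (1 / real (card (D i))) *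
              elog (sep_number \<epsilon> (MapSet act \<rho> F \<delta> (D i) (\<sigma> i)) (rho2 (D i) \<rho>))
        \<le> ereal (1 / real (card (D i))) *
              elog (sep_number \<epsilon> (MapSet act \<rho> F \<delta> (D i) (\<sigma> i)) (rhoinf (D i) \<rho>))) NF"
      using evI
    proof (rule eventually_mono)
      fix i assume i: "i \<in> I"
      have "sep_number \<epsilon> (MapSet act \<rho> F \<delta> (D i) (\<sigma> i)) (rho2 (D i) \<rho>)
          \<le> sep_number \<epsilon> (MapSet act \<rho> F \<delta> (D i) (\<sigma> i)) (rhoinf (D i) \<rho>)"
        using DI[OF i] by (intro sep_mono nonneg) auto
      hence "elog (sep_number \<epsilon> (MapSet act \<rho> F \<delta> (D i) (\<sigma> i)) (rho2 (D i) \<rho>))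
          \<le> elog (sep_number \<epsilon> (MapSet act \<rho> F \<delta> (D i) (\<sigma> i)) (rhoinf (D i) \<rho>))"
        by (rule elog_mono)
      thus "ereal (1 / real (card (D i))) *
              elog (sep_number \<epsilon> (MapSet act \<rho> F \<delta> (D i) (\<sigma> i)) (rho2 (D i) \<rho>))
        \<le> ereal (1 / real (card (D i))) *
              elog (sep_number \<epsilon> (MapSet act \<rho> F \<delta> (D i) (\<sigma> i)) (rhoinf (D i) \<rho>))"
        by (rule ereal_mult_left_mono) simp
    qed
  qed
  have BA: "\<exists>\<epsilon>'>0. \<forall>F \<delta>. LA \<epsilon> F \<delta> \<le> LB \<epsilon>' F \<delta> + ereal \<kappa>" if e: "0 < \<epsilon>" and k: "0 < \<kappa>" for \<epsilon> \<kappa>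
  proof -
    have e3: "0 < \<epsilon>/3" using e by simp
    obtain C where finC: "finite C" and cov: "\<And>y. \<exists>c\<in>C. \<rho> c y < \<epsilon>/3"
      using finite_cover[OF assms(1) cont refl e3] by metis
    define p where "p = 1 - exp (-\<kappa>/2)"
    have p01: "0 < p" "p < 1" unfolding p_def using k by auto
    have "C \<noteq> {}" using cov by blast
    hence K1: "1 \<le> real (card C)" using finC by (simp add: Suc_le_eq card_gt_0_iff)
    have lnpos: "0 < ln (real (card C)) - ln p"
    proof -
      have "ln p < 0" using p01 by simp
      moreover have "0 \<le> ln (real (card C))" using K1 by simp
      ultimately show ?thesis by linarith
    qed
    define \<tau> where "\<tau> = \<kappa>/2 / (ln (real (card C)) - ln p)"
    have tau: "0 < \<tau>" "\<tau> * (ln (real (card C)) - ln p) \<le> \<kappa>/2"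
      unfolding \<tau>_def using lnpos k by (auto simp: field_simps)
    define \<epsilon>' where "\<epsilon>' = \<epsilon> * sqrt \<tau> / 2"
    have e'pos: "0 < \<epsilon>'" unfolding \<epsilon>'_def using e tau by simp
    show ?thesis
    proof (intro exI[of _ \<epsilon>'] conjI allI e'pos)
      fix F \<delta>
      have eq: "LB \<epsilon>' F \<delta> + ereal \<kappa> = Limsup NF (\<lambda>i. ereal (1 / real (card (D i))) *
              elog (sep_number \<epsilon>' (MapSet act \<rho> F \<delta> (D i) (\<sigma> i)) (rho2 (D i) \<rho>)) + ereal \<kappa>)"
        unfolding LB_def by (rule Limsup_add_ereal_right[OF nb, symmetric]) simp
      show "LA \<epsilon> F \<delta> \<le> LB \<epsilon>' F \<delta> + ereal \<kappa>"
        unfolding eq LA_def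
      proof (rule Limsup_mono)
        show "eventually (\<lambda>i. ereal (1 / real (card (D i))) *
              elog (sep_number \<epsilon> (MapSet act \<rho> F \<delta> (D i) (\<sigma> i)) (rhoinf (D i) \<rho>))
           \<le> ereal (1 / real (card (D i))) *
              elog (sep_number \<epsilon>' (MapSet act \<rho> F \<delta> (D i) (\<sigma> i)) (rho2 (D i) \<rho>)) + ereal \<kappa>) NF"
          using evI
        proof (rule eventually_mono)
          fix i assume i: "i \<in> I"
          define n where "n = real (card (D i))"
          define A where "A = sep_number \<epsilon> (MapSet act \<rho> F \<delta> (D i) (\<sigma> i)) (rhoinf (D i) \<rho>)"
          define B where "B = sep_number \<epsilon>' (MapSet act \<rho> F \<delta> (D i) (\<sigma> i)) (rho2 (D i) \<rho>)"
          have finD: "finite (D i)" and neD: "D i \<noteq> {}" using DI[OF i] by auto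
          have n0: "0 < n" unfolding n_def using finD neD by (simp add: card_gt_0_iff)
          have "A \<le> B * ereal (exp (\<kappa> * n))"
            unfolding A_def B_def n_def
            by (rule sep_compare[OF sym tri refl finD neD finC cov e k p_def tau \<epsilon>'_def])
          hence "elog A \<le> elog B + ereal (ln (exp (\<kappa> * n)))" by (rule elog_bound) simp
          hence "elog A \<le> elog B + ereal (\<kappa> * n)" by simp
          hence "ereal (1 / n) * elog A \<le> ereal (1 / n) * (elog B + ereal (\<kappa> * n))"
            by (rule ereal_mult_left_mono) (use n0 in simp)
          also have "\<dots> = ereal (1 / n) * elog B + ereal (1 / n) * ereal (\<kappa> * n)"
            by (rule ereal_distrib_left) auto
          also have "ereal (1 / n) * ereal (\<kappa> * n) = ereal \<kappa>" using n0 by simp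
          finally show "ereal (1 / real (card (D i))) *
              elog (sep_number \<epsilon> (MapSet act \<rho> F \<delta> (D i) (\<sigma> i)) (rhoinf (D i) \<rho>))
           \<le> ereal (1 / real (card (D i))) *
              elog (sep_number \<epsilon>' (MapSet act \<rho> F \<delta> (D i) (\<sigma> i)) (rho2 (D i) \<rho>)) + ereal \<kappa>"
            unfolding A_def B_def n_def .
        qed
      qed
    qed
  qed
  have main: "(SUP \<epsilon>\<in>{0<..}. INF F\<in>{F. finite F}. INF \<delta>\<in>{0<..}. LA \<epsilon> F \<delta>)
      = (SUP \<epsilon>\<in>{0<..}. INF F\<in>{F. finite F}. INF \<delta>\<in>{0<..}. LB \<epsilon> F \<delta>)"
  proof (rule antisym)
    show "(SUP \<epsilon>\<in>{0<..}. INF F\<in>{F. finite F}. INF \<delta>\<in>{0<..}. LA \<epsilon> F \<delta>)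
      \<le> (SUP \<epsilon>\<in>{0<..}. INF F\<in>{F. finite F}. INF \<delta>\<in>{0<..}. LB \<epsilon> F \<delta>)"
    proof (rule SUP_least)
      fix \<epsilon> :: real assume "\<epsilon> \<in> {0<..}"
      hence e: "0 < \<epsilon>" by simp
      show "(INF F\<in>{F. finite F}. INF \<delta>\<in>{0<..}. LA \<epsilon> F \<delta>)
          \<le> (SUP \<epsilon>\<in>{0<..}. INF F\<in>{F. finite F}. INF \<delta>\<in>{0<..}. LB \<epsilon> F \<delta>)"
      proof (rule ereal_le_epsilon2)
        fix \<kappa> :: real assume k: "0 < \<kappa>"
        obtain \<epsilon>' where e': "0 < \<epsilon>'" and le: "\<And>F \<delta>. LA \<epsilon> F \<delta> \<le> LB \<epsilon>' F \<delta> + ereal \<kappa>"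
          using BA[OF e k] by blast
        have "(INF F\<in>{F. finite F}. INF \<delta>\<in>{0<..}. LA \<epsilon> F \<delta>) - ereal \<kappa>
            \<le> (INF F\<in>{F. finite F}. INF \<delta>\<in>{0<..}. LB \<epsilon>' F \<delta>)"
        proof (intro INF_greatest)
          fix F :: "'m set" and \<delta> :: real assume F: "F \<in> {F. finite F}" and d: "\<delta> \<in> {0<..}"
          have "(INF F\<in>{F. finite F}. INF \<delta>\<in>{0<..}. LA \<epsilon> F \<delta>) \<le> LA \<epsilon> F \<delta>"
            by (rule INF_lower2[OF F INF_lower[OF d]])
          also have "\<dots> \<le> LB \<epsilon>' F \<delta> + ereal \<kappa>" by (rule le)
          finally show "(INF F\<in>{F. finite F}. INF \<delta>\<in>{0<..}. LA \<epsilon> F \<delta>) - ereal \<kappa> \<le> LB \<epsilon>' F \<delta>"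
            by (simp add: ereal_minus_le)
        qed
        also have "\<dots> \<le> (SUP \<epsilon>\<in>{0<..}. INF F\<in>{F. finite F}. INF \<delta>\<in>{0<..}. LB \<epsilon> F \<delta>)"
          by (rule SUP_upper) (use e' in simp)
        finally show "(INF F\<in>{F. finite F}. INF \<delta>\<in>{0<..}. LA \<epsilon> F \<delta>)
            \<le> (SUP \<epsilon>\<in>{0<..}. INF F\<in>{F. finite F}. INF \<delta>\<in>{0<..}. LB \<epsilon> F \<delta>) + ereal \<kappa>"
          by (simp add: ereal_minus_le)
      qed
    qed
    show "(SUP \<epsilon>\<in>{0<..}. INF F\<in>{F. finite F}. INF \<delta>\<in>{0<..}. LB \<epsilon> F \<delta>)
      \<le> (SUP \<epsilon>\<in>{0<..}. INF F\<in>{F. finite F}. INF \<delta>\<in>{0<..}. LA \<epsilon> F \<delta>)"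
      by (intro SUP_mono' INF_mono' AB)
  qed
  show ?thesis using main unfolding sofic_entropy_def LA_def LB_def NF_def .
qed

end
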